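(* For all integers $n\ge 0$, $$\left\lfloor \frac{\varphi+2}{5}\,n\right\rfloor \le a(n)\le \lfloor \varphi n\rfloor .$$
   Context: $\varphi=(1+\sqrt5)/2$. Let $(F_n)_{n\ge 0}$ be the Fibonacci numbers: $F_0=0$, $F_1=1$, $F_n=F_{n-1}+F_{n-2}$ for $n\ge 2$. Define $(a(n))_{n\ge 0}$ (OEIS A105774) by $a(0)=0$, $a(1)=1$, and for $n\ge 2$, $a(n)=F_{j+1}-a(n-F_j)$, where $j\ge 2$ is the unique index with $F_j<n\le F_{j+1}$. *)

theory Defs
  imports Complex_Main
begin

fun F :: "nat \<Rightarrow> nat" where
  "F 0 = 0"
| "F (Suc 0) = 1"
| "F (Suc (Suc n)) = F (Suc n) + F n"

definition phi :: real where "phi = (1 + sqrt 5) / 2"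

lemma F_mono_step: "F j \<le> F (Suc j)"
  by (induction j rule: F.induct) auto

lemma F_mono: "i \<le> j \<Longrightarrow> F i \<le> F j"
  by (induction j) (auto simp: le_Suc_eq intro: le_trans[OF _ F_mono_step])

lemma F_strict: "j \<ge> 2 \<Longrightarrow> F j < F (Suc j)"
proof (cases j)
  case (Suc m)
  assume "j \<ge> 2" then have "m \<ge> 1" using Suc by auto
  then have "F m \<ge> 1" using F_mono[of 1 m] by auto
  then show ?thesis using Suc by auto
qed simp

lemma F_ge: "F (Suc (Suc j)) \<ge> j"
proof (induction j)
  case (Suc j) then show ?case using F_strict[of "Suc (Suc j)"] by auto
qed simp

definition fibidx :: "nat \<Rightarrow> nat" where
  "fibidx n = (THE j. 2 \<le> j \<and> F j < n \<and> n \<le> F (Suc j))"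

lemma fibidx_ex: "n \<ge> 2 \<Longrightarrow> \<exists>j. 2 \<le> j \<and> F j < n \<and> n \<le> F (Suc j)"
proof -
  assume n: "n \<ge> 2"
  define j where "j = (LEAST j. 2 \<le> j \<and> n \<le> F (Suc j))"
  have ex: "2 \<le> Suc n \<and> n \<le> F (Suc (Suc n))" using F_ge[of n] n by simp
  have j: "2 \<le> j \<and> n \<le> F (Suc j)" unfolding j_def by (rule LeastI[of "\<lambda>j. 2 \<le> j \<and> n \<le> F (Suc j)", OF ex])
  have "F j < n"
  proof (cases "j = 2")
    case True then show ?thesis using n by (simp add: numeral_2_eq_2)
  next
    case False
    then obtain k where k: "j = Suc k" "k \<ge> 2" using j by (cases j) auto
    have "\<not> (2 \<le> k \<and> n \<le> F (Suc k))"
      using not_less_Least[of k "\<lambda>j. 2 \<le> j \<and> n \<le> F (Suc j)"] k unfolding j_def by auto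
    then show ?thesis using k by auto
  qed
  then show ?thesis using j by blast
qed

lemma fibidx_uniq:
  assumes "2 \<le> i" "F i < n" "n \<le> F (Suc i)" "2 \<le> j" "F j < n" "n \<le> F (Suc j)"
  shows "i = j"
proof (rule ccontr)
  assume "i \<noteq> j"
  then consider "i < j" | "j < i" by linarith
  then show False
  proof cases
    case 1 then have "F (Suc i) \<le> F j" by (intro F_mono) auto
    then show False using assms by auto
  next
    case 2 then have "F (Suc j) \<le> F i" by (intro F_mono) auto
    then show False using assms by auto
  qed
qed

lemma fibidx: "n \<ge> 2 \<Longrightarrow> 2 \<le> fibidx n \<and> F (fibidx n) < n \<and> n \<le> F (Suc (fibidx n))"
  unfolding fibidx_def
  by (rule theI') (use fibidx_ex fibidx_uniq in blast)

function A :: "nat \<Rightarrow> int" where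
  "A n = (if n = 0 then 0 else if n = 1 then 1
          else int (F (Suc (fibidx n))) - A (n - F (fibidx n)))"
  by auto
termination
proof (relation "measure id")
  fix n :: nat assume "\<not> n = 0" "\<not> n = 1"
  then have "n \<ge> 2" by auto
  then have "fibidx n \<ge> 2" using fibidx by blast
  then have "F (fibidx n) \<ge> 1" using F_mono[of 1 "fibidx n"] by auto
  then show "(n - F (fibidx n), n) \<in> measure id" using \<open>n \<ge> 2\<close> by auto
qed auto

end

theory Submission imports Defs begin

definition cc :: real where "cc = (phi + 2) / 5"
definition psi :: real where "psi = (1 - sqrt 5) / 2"
definition rr :: real where "rr = (sqrt 5 - 1) / 2"

lemma s5: "sqrt 5 * sqrt 5 = (5::real)" by simp
lemma s5b: "2 < sqrt (5::real)" "sqrt (5::real) < 9/4"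
  by (rule real_less_rsqrt, simp) (rule real_less_lsqrt, simp_all add: power2_eq_square)

lemma psi_sq: "psi^2 = psi + 1"
  unfolding psi_def power2_eq_square using s5 by (simp add: field_simps) 

lemma G: "real (F (Suc j)) - phi * F j = psi^j \<and> real (F (Suc (Suc j))) - phi * F (Suc j) = psi^(Suc j)"
proof (induction j)
  case 0 then show ?case by (simp add: phi_def psi_def field_simps)
next
  case (Suc j)
  have "psi ^ Suc (Suc j) = psi^j * psi^2" by (simp add: power2_eq_square)
  also have "\<dots> = psi^(Suc j) + psi^j" by (simp add: psi_sq algebra_simps)
  finally have p: "psi ^ Suc (Suc j) = psi^(Suc j) + psi^j" .
  have "real (F (Suc(Suc(Suc j)))) - phi * F (Suc (Suc j)) = (real (F (Suc (Suc j))) - phi * F (Suc j)) + (real (F (Suc j)) - phi * F j)" by (simp add: distrib_left)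
  then show ?case using Suc.IH p by (simp del: F.simps)
qed

lemma E: "cc*(F(i+2) + F i) - F(i+2) = psi^(i+1)/sqrt 5 \<and> cc*(F(i+3) + F (i+1)) - F(i+3) = psi^(i+2)/sqrt 5"
proof (induction i)
  case 0 
  have a: "cc - 1 = psi / sqrt 5" unfolding cc_def psi_def phi_def using s5 by (simp add: field_simps)
  have b: "3*cc - 2 = psi^2 / sqrt 5" unfolding cc_def psi_def phi_def power2_eq_square using s5 by (simp add: field_simps)
  show ?case using a b by (simp add: numeral_eq_Suc)
next
  case (Suc i)
  have "psi ^ (i+3) = psi^(i+1) * psi^2" by (simp add: power2_eq_square numeral_eq_Suc)
  also have "\<dots> = psi^(i+2) + psi^(i+1)" by (simp add: psi_sq algebra_simps)
  finally have p: "psi ^ (i+3) = psi^(i+2) + psi^(i+1)" .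
  have f: "F (i+4) = F (i+3) + F(i+2)" "F (i+3) = F (i+2) + F(i+1)" by (simp_all add: numeral_eq_Suc)
  show ?case using Suc p f by (simp add: add_divide_distrib algebra_simps numeral_eq_Suc)
qed

lemma rr_id: "1 - rr^4 = sqrt 5 * rr^2"
  unfolding rr_def using s5 by (simp add: field_simps power_def numeral_eq_Suc)  


declare A.simps[simp del]

lemma A_rec: "n \<ge> 2 \<Longrightarrow> A n = int (F (Suc (fibidx n))) - A (n - F (fibidx n))"
  by (subst A.simps) simp

lemma A1: "A 1 = 1" by (subst A.simps) simp

lemma fibidx2: "fibidx 2 = 2"
  using fibidx[of 2] fibidx_uniq[of "fibidx 2" 2 2] by (simp add: numeral_eq_Suc)

lemma A2: "A 2 = 1"
  using A_rec[of 2] fibidx2 A1 by (simp add: numeral_eq_Suc)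

definition U :: "nat \<Rightarrow> real" where
  "U k = F k + cc * F (k-1) + 1/2 - rr^(k-2)/5"
definition L :: "nat \<Rightarrow> real" where
  "L k = rr^k/5 - 1/2"

lemma rr_pos: "0 < rr" "rr < 1" unfolding rr_def using s5b by auto
lemma cc_bounds: "0 < cc" "cc < 1" unfolding cc_def phi_def using s5b by (auto simp: field_simps)
lemma rr3: "rr^3 = sqrt 5 - 2"
  unfolding rr_def using s5 by (simp add: field_simps power_def numeral_eq_Suc)
lemma psi_rr: "psi^i \<le> rr^i"
proof -
  have "psi = - rr" unfolding psi_def rr_def by (simp add: field_simps)
  then have a: "\<bar>psi\<bar> = rr" using rr_pos by simp
  have "psi^i \<le> \<bar>psi^i\<bar>" by simp
  also have "\<dots> = rr^i" by (simp add: power_abs a)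
  finally show ?thesis .
qed

lemma main: "1 \<le> n \<Longrightarrow> 2 \<le> k \<Longrightarrow> n \<le> F k \<Longrightarrow>
   real_of_int (A n) + cc * n \<le> U k \<and> L k \<le> real_of_int (A n) - cc * n"
proof (induction n arbitrary: k rule: less_induct)
  case (less n)
  have rk: "rr^k \<le> 1" using rr_pos by (simp add: power_le_one)
  have rk2: "rr^(k-2) \<le> 1" using rr_pos by (simp add: power_le_one)
  have Fk1: "F (k-1) \<ge> 1" using F_mono[of 1 "k-1"] less.prems by auto
  consider "n = 1" | "n = 2" | "n \<ge> 3" using less.prems by linarith
  then show ?case
  proof cases
    case 1
    have "F k \<ge> 1" using F_mono[of 1 k] less.prems by auto
    then have r1: "real (F k) \<ge> 1" by simp
    have c1: "cc * 1 \<le> cc * F (k-1)" using Fk1 cc_bounds by (intro mult_left_mono) auto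
    have "real_of_int (A n) + cc * n = 1 + cc" "real_of_int (A n) - cc * n = 1 - cc" using 1 A1 by simp_all
    then show ?thesis using r1 c1 rk rk2 cc_bounds unfolding U_def L_def by linarith
  next
    case 2
    have k3: "k \<ge> 3"
    proof (rule ccontr)
      assume "\<not> k \<ge> 3" then have "k = 2" using less.prems by auto
      then show False using less.prems 2 by (simp add: numeral_eq_Suc)
    qed
    have a: "rr^(k-2) \<le> rr^1" by (rule power_decreasing) (use k3 rr_pos in auto)
    have b: "rr^k \<le> rr^3" by (rule power_decreasing) (use k3 rr_pos in auto)
    have c1: "cc * 1 \<le> cc * F (k-1)" using Fk1 cc_bounds by (intro mult_left_mono) auto
    have "cc + rr/5 \<le> 3/2" and "(sqrt 5 - 2)/5 - 1/2 \<le> 1 - 2 * cc"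
      using cc_bounds rr_pos s5b unfolding cc_def phi_def by (simp_all add: field_simps)
    moreover have "rr^k/5 \<le> (sqrt 5 - 2)/5" "rr^(k-2)/5 \<le> rr/5" using a b rr3 by simp_all
    moreover have "real (F k) \<ge> 2" using less.prems 2 by simp
    moreover have "real_of_int (A n) + cc * n = 1 + 2*cc" "real_of_int (A n) - cc * n = 1 - 2*cc" using 2 A2 by simp_all
    ultimately show ?thesis using c1 unfolding U_def L_def by linarith
  next
    case 3
    define j where "j = fibidx n"
    have j: "2 \<le> j" "F j < n" "n \<le> F (Suc j)" using fibidx[of n] 3 unfolding j_def by auto
    have j3: "j \<ge> 3"
    proof (rule ccontr)
      assume "\<not> j \<ge> 3" then have "j = 2" using j by auto
      then show False using j 3 by (simp add: numeral_eq_Suc)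
    qed
    then obtain t where t: "j = t + 3" by (metis add.commute le_Suc_ex)
    define m where "m = n - F j"
    have Fj: "F (t+4) = F (t+3) + F (t+2)" "F (t+3) = F(t+2) + F (t+1)" "F (t+2) = F (t+1) + F t"
      by (simp_all add: numeral_eq_Suc)
    have m: "1 \<le> m" "m < n" "m \<le> F (t+2)" "n = F (t+3) + m"
      using j Fj F_mono[of 1 j] j3 unfolding m_def t by (auto simp: numeral_eq_Suc)
    have An: "A n = int (F (t+4)) - A m" using A_rec[of n] 3 unfolding m_def j_def[symmetric] t
      by (simp add: numeral_eq_Suc)
    have IH: "real_of_int (A m) + cc * m \<le> U (t+2) \<and> L (t+2) \<le> real_of_int (A m) - cc * m"
      using less.IH[of m "t+2"] m by auto
    have kt: "k \<ge> t + 4"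
    proof (rule ccontr)
      assume "\<not> k \<ge> t + 4" then have "F k \<le> F (t+3)" by (intro F_mono) auto
      then show False using less.prems j t by auto
    qed
    have Ek: "cc*(F(t+3) + F (t+1)) - F(t+3) = psi^(t+2)/sqrt 5" using E[of "t+1"] by (simp add: add.assoc numeral_eq_Suc del: F.simps)
    have rid: "rr^t - rr^(t+4) = sqrt 5 * rr^(t+2)"
    proof -
      have "rr^t - rr^(t+4) = rr^t * (1 - rr^4)" by (simp add: power_add algebra_simps)
      also have "\<dots> = sqrt 5 * rr^(t+2)" by (simp add: rr_id power_add power2_eq_square)
      finally show ?thesis .
    qed
    have ps: "psi^(t+2)/sqrt 5 \<le> rr^(t+2)/sqrt 5" by (rule divide_right_mono[OF psi_rr]) simp
    have rs: "rr^(t+2)/sqrt 5 = (rr^t - rr^(t+4))/5"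
    proof -
      have "(rr^t - rr^(t+4))/5 = sqrt 5 * rr^(t+2) / 5" by (simp add: rid)
      also have "\<dots> = rr^(t+2)/sqrt 5" using s5 by (simp add: field_simps)
      finally show ?thesis by simp
    qed
    have U1: "real_of_int (A n) + cc * n \<le> U (t+4)"
      using IH An m(4) unfolding U_def L_def by (simp add: algebra_simps)
    have L1: "L (t+4) \<le> real_of_int (A n) - cc * n"
    proof -
      have "real_of_int (A n) - cc * n = F (t+4) - cc * F (t+3) - (real_of_int (A m) + cc * m)"
        using An m(4) by (simp add: algebra_simps)
      also have "\<dots> \<ge> F (t+4) - cc * F (t+3) - U (t+2)" using IH by linarith
      finally have "real_of_int (A n) - cc * n \<ge> F (t+4) - cc * F (t+3) - (F (t+2) + cc * F (t+1) + 1/2 - rr^t/5)"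
        unfolding U_def by simp
      then show ?thesis using Ek ps rs Fj unfolding L_def by (simp add: algebra_simps)
    qed
    have "U (t+4) \<le> U k"
    proof -
      have "F (t+4) \<le> F k" "F (t+3) \<le> F (k-1)" using kt by (auto intro!: F_mono)
      moreover have "rr^(k-2) \<le> rr^(t+2)" by (rule power_decreasing) (use kt rr_pos in auto)
      ultimately have "real (F (t+4)) \<le> F k" "cc * F (t+3) \<le> cc * F (k-1)" "rr^(k-2)/5 \<le> rr^(t+2)/5"
        using cc_bounds by (auto intro!: mult_left_mono simp del: F.simps)
      moreover have "U (t+4) = F(t+4) + cc*F(t+3) + 1/2 - rr^(t+2)/5" by (simp add: U_def add.commute del: F.simps)
      ultimately show ?thesis unfolding U_def by linarith
    qed
    moreover have "L k \<le> L (t+4)"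
    proof -
      have "rr^k \<le> rr^(t+4)" by (rule power_decreasing) (use kt rr_pos in auto)
      then show ?thesis unfolding L_def by simp
    qed
    ultimately show ?thesis using U1 L1 by linarith
  qed
qed


lemma lower: "1 \<le> n \<Longrightarrow> cc * n - 1/2 \<le> real_of_int (A n)"
proof -
  assume n: "1 \<le> n"
  have "L (n+2) \<le> real_of_int (A n) - cc * n" using main[of n "n+2"] n F_ge[of n] by simp
  moreover have "L (n+2) \<ge> - 1/2" unfolding L_def using rr_pos by simp
  ultimately show ?thesis by linarith
qed

lemma A_nonneg: "1 \<le> n \<Longrightarrow> 0 \<le> A n"
proof -
  assume n: "1 \<le> n"
  have "cc * n \<ge> 0" using cc_bounds by simp
  then have "real_of_int (A n) > -1" using lower[OF n] by linarith
  then show ?thesis by linarith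
qed

lemma upper: "real_of_int (A n) \<le> phi * n"
proof -
  consider "n = 0" | "n = 1" | "n \<ge> 2" by linarith
  then show ?thesis
  proof cases
    case 1 then show ?thesis by (simp add: A.simps)
  next
    case 2 then show ?thesis using A1 s5b unfolding phi_def by simp
  next
    case 3
    define j where "j = fibidx n"
    have j: "2 \<le> j" "F j < n" "n \<le> F (Suc j)" using fibidx[of n] 3 unfolding j_def by auto
    define m where "m = n - F j"
    have m: "1 \<le> m" "n = F j + m" using j unfolding m_def by auto
    have An: "A n = int (F (Suc j)) - A m" using A_rec[of n] 3 unfolding m_def j_def by simp
    have "real (F (Suc j)) - phi * F j = psi^j" using G[of j] by simp
    moreover have "psi^j \<le> 1" using psi_rr[of j] rr_pos power_le_one[of rr j] by simp
    moreover have "phi \<ge> 1" unfolding phi_def using s5b by simp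
    then have "phi * 1 \<le> phi * m" using m by (intro mult_left_mono) auto
    then have "phi \<le> phi * m" by simp
    moreover have "real_of_int (A m) \<ge> 0" using A_nonneg[OF m(1)] by simp
    moreover have "real_of_int (A n) = real (F (Suc j)) - real_of_int (A m)" using An by simp
    moreover have "phi * n = phi * F j + phi * m" using m(2) by (simp add: distrib_left)
    moreover have "phi \<ge> 1" unfolding phi_def using s5b by simp
    ultimately show ?thesis by linarith
  qed
qed

theorem proposition6:
  fixes n :: nat
  shows "\<lfloor>(phi + 2) / 5 * real n\<rfloor> \<le> A n \<and> A n \<le> \<lfloor>phi * real n\<rfloor>"
proof
  show "A n \<le> \<lfloor>phi * real n\<rfloor>" using upper by (simp add: le_floor_iff)
  show "\<lfloor>(phi + 2) / 5 * real n\<rfloor> \<le> A n"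
  proof (cases "n = 0")
    case True then show ?thesis by (simp add: A.simps)
  next
    case False
    then have "cc * n - 1/2 \<le> real_of_int (A n)" using lower by simp
    then show ?thesis unfolding floor_le_iff cc_def[symmetric] by linarith
  qed
qed

end
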